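(* Let $n,k,t$ be positive integers with $k>t>0$ and $n>2k-t$. Then $$\operatorname{tw}(K(n,k,t))\le \binom{n}{k}-\binom{n-t}{k-t}-1.$$
   Context: For integers $k>t\ge 1$ and $n>2k-t$, the generalized Kneser graph $K(n,k,t)$ is the graph whose vertices are the $k$-element subsets of $[n]=\{1,\dots,n\}$, two vertices $K,K'$ being adjacent if and only if $|K\cap K'|<t$. A tree decomposition of a graph $\Gamma$ is a pair $(T,(B_x)_{x\in V(T)})$ where $T$ is a tree and each $B_x\subseteq V(\Gamma)$, such that every edge of $\Gamma$ is contained in some $B_x$, and for each vertex $v$ of $\Gamma$ the set $\{x\in V(T): v\in B_x\}$ is non-empty and induces a connected subgraph of $T$. Its width is $\max_x |B_x|-1$, and the treewidth $\operatorname{tw}(\Gamma)$ is the minimum width of a tree decomposition of $\Gamma$. *)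

theory Defs
  imports Main
begin

definition walk_in :: "'a set \<Rightarrow> ('a \<Rightarrow> 'a \<Rightarrow> bool) \<Rightarrow> 'a list \<Rightarrow> bool" where
  "walk_in S E p \<longleftrightarrow> p \<noteq> [] \<and> set p \<subseteq> S \<and> (\<forall>i. Suc i < length p \<longrightarrow> E (p ! i) (p ! Suc i))"

definition connected_in :: "'a set \<Rightarrow> ('a \<Rightarrow> 'a \<Rightarrow> bool) \<Rightarrow> bool" where
  "connected_in S E \<longleftrightarrow> S \<noteq> {} \<and>
     (\<forall>x\<in>S. \<forall>y\<in>S. \<exists>p. walk_in S E p \<and> hd p = x \<and> last p = y)"

definition has_cycle :: "'a set \<Rightarrow> ('a \<Rightarrow> 'a \<Rightarrow> bool) \<Rightarrow> bool" where
  "has_cycle V E \<longleftrightarrow> (\<exists>p. walk_in V E p \<and> distinct p \<and> length p \<ge> 3 \<and> E (last p) (hd p))"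

definition is_tree :: "'a set \<Rightarrow> ('a \<Rightarrow> 'a \<Rightarrow> bool) \<Rightarrow> bool" where
  "is_tree V E \<longleftrightarrow> finite V \<and> (\<forall>x y. E x y \<longrightarrow> x \<in> V \<and> y \<in> V) \<and>
     (\<forall>x y. E x y \<longleftrightarrow> E y x) \<and> (\<forall>x. \<not> E x x) \<and>
     connected_in V E \<and> \<not> has_cycle V E"

definition tree_decomposition ::
  "'a set \<Rightarrow> ('a \<Rightarrow> 'a \<Rightarrow> bool) \<Rightarrow> nat set \<Rightarrow> (nat \<Rightarrow> nat \<Rightarrow> bool) \<Rightarrow> (nat \<Rightarrow> 'a set) \<Rightarrow> bool" where
  "tree_decomposition V E TV TE B \<longleftrightarrow>
     is_tree TV TE \<and> (\<forall>x\<in>TV. B x \<subseteq> V) \<and>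
     (\<forall>u\<in>V. \<forall>v\<in>V. E u v \<longrightarrow> (\<exists>x\<in>TV. u \<in> B x \<and> v \<in> B x)) \<and>
     (\<forall>v\<in>V. connected_in {x\<in>TV. v \<in> B x} TE)"

definition td_width :: "nat set \<Rightarrow> (nat \<Rightarrow> 'a set) \<Rightarrow> int" where
  "td_width TV B = int (Max ((\<lambda>x. card (B x)) ` TV)) - 1"

definition treewidth :: "'a set \<Rightarrow> ('a \<Rightarrow> 'a \<Rightarrow> bool) \<Rightarrow> int" where
  "treewidth V E = (LEAST w. \<exists>TV TE B. tree_decomposition V E TV TE B \<and> td_width TV B = w)"

definition kneser_vertices :: "nat \<Rightarrow> nat \<Rightarrow> nat set set" where
  "kneser_vertices n k = {K. K \<subseteq> {1..n} \<and> card K = k}"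

definition kneser_adj :: "nat \<Rightarrow> nat \<Rightarrow> nat \<Rightarrow> nat set \<Rightarrow> nat set \<Rightarrow> bool" where
  "kneser_adj n k t K K' \<longleftrightarrow> K \<in> kneser_vertices n k \<and> K' \<in> kneser_vertices n k \<and> card (K \<inter> K') < t"

end

theory Submission
  imports Defs
begin

lemma least_int_le:
  fixes P :: "int \<Rightarrow> bool"
  assumes lb: "\<And>w. P w \<Longrightarrow> w \<ge> -1" and p: "P w0"
  shows "(LEAST w. P w) \<le> w0"
proof -
  define Q where "Q = (\<lambda>m::nat. P (int m - 1))"
  have q0: "Q (nat (w0 + 1))" using p lb[OF p] by (simp add: Q_def)
  define m0 where "m0 = (LEAST m. Q m)"
  have qm: "Q m0" unfolding m0_def using q0 by (rule LeastI)
  have "(LEAST w. P w) = int m0 - 1"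
  proof (rule Least_equality)
    show "P (int m0 - 1)" using qm by (simp add: Q_def)
  next
    fix y assume "P y"
    then have "y \<ge> -1" by (rule lb)
    then have "Q (nat (y+1))" using \<open>P y\<close> by (simp add: Q_def)
    then have "m0 \<le> nat (y+1)" unfolding m0_def by (rule Least_le)
    then show "int m0 - 1 \<le> y" using \<open>y \<ge> -1\<close> by linarith
  qed
  moreover have "m0 \<le> nat (w0+1)" unfolding m0_def by (rule Least_le[where P=Q, OF q0])
  ultimately show ?thesis using lb[OF p] by linarith
qed

definition starE :: "nat \<Rightarrow> nat \<Rightarrow> nat \<Rightarrow> bool" where
  "starE m x y \<longleftrightarrow> (x = 0 \<and> y \<in> {1..m}) \<or> (y = 0 \<and> x \<in> {1..m})"

lemma star_conn:
  assumes "S \<subseteq> {0..m}" "0 \<in> S"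
  shows "connected_in S (starE m)"
  unfolding connected_in_def
proof (intro conjI ballI)
  show "S \<noteq> {}" using assms by auto
next
  fix x y assume x: "x \<in> S" and y: "y \<in> S"
  show "\<exists>p. walk_in S (starE m) p \<and> hd p = x \<and> last p = y"
  proof (cases "x = y")
    case True
    then show ?thesis using x by (intro exI[of _ "[x]"]) (auto simp: walk_in_def)
  next
    case ne: False
    show ?thesis
    proof (cases "x = 0")
      case True
      then show ?thesis using x y ne assms
        by (intro exI[of _ "[x,y]"]) (auto simp: walk_in_def starE_def less_Suc_eq)
    next
      case x0: False
      show ?thesis
      proof (cases "y = 0")
        case True
        then show ?thesis using x y ne assms
          by (intro exI[of _ "[x,y]"]) (auto simp: walk_in_def starE_def less_Suc_eq)
      next
        case False
        have "x \<in> {1..m}" "y \<in> {1..m}" using x y x0 False assms by auto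
        then show ?thesis using x y assms
          by (intro exI[of _ "[x,0,y]"]) (auto simp: walk_in_def starE_def less_Suc_eq nth_Cons split: nat.splits)
      qed
    qed
  qed
qed

lemma single_conn: "connected_in {x} E"
  unfolding connected_in_def by (auto intro!: exI[of _ "[x]"] simp: walk_in_def)

lemma star_tree: "is_tree {0..m} (starE m)"
  unfolding is_tree_def
proof (intro conjI allI)
  show "connected_in {0..m} (starE m)" by (rule star_conn) auto
  show "\<not> has_cycle {0..m} (starE m)"
  proof
    assume "has_cycle {0..m} (starE m)"
    then obtain p where w: "walk_in {0..m} (starE m) p" and d: "distinct p" and l: "length p \<ge> 3"
      and c: "starE m (last p) (hd p)" unfolding has_cycle_def by blast
    have e: "\<And>i. Suc i < length p \<Longrightarrow> starE m (p!i) (p!Suc i)" using w by (auto simp: walk_in_def)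
    have e01: "p!0 = 0 \<or> p!1 = 0" using e[of 0] l by (auto simp: starE_def)
    have e12: "p!1 = 0 \<or> p!2 = 0" using e[of 1] l by (auto simp: starE_def numeral_2_eq_2)
    have lens: "0<length p" "1<length p" "2<length p" using l by auto
    have d02: "p!0 \<noteq> p!2" "p!0 \<noteq> p!1" "p!1 \<noteq> p!2"
      using nth_eq_iff_index_eq[OF d lens(1) lens(3)] nth_eq_iff_index_eq[OF d lens(1) lens(2)]
        nth_eq_iff_index_eq[OF d lens(2) lens(3)] by simp_all
    have p1: "p!1 = 0" using e01 e12 d02 by auto
    show False
    proof (cases "length p = 3")
      case True
      have "p \<noteq> []" using lens by auto
      then have "last p = p!2" using True by (simp add: last_conv_nth)
      moreover have "hd p = p!0" using \<open>p \<noteq> []\<close> by (simp add: hd_conv_nth)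
      ultimately show False using c p1 d02 by (auto simp: starE_def)
    next
      case False
      then have "Suc 2 < length p" using l by auto
      from e[OF this] have "p!2 = 0 \<or> p!3 = 0" by (auto simp: starE_def numeral_3_eq_3)
      moreover have "p!1 \<noteq> p!3" using d \<open>Suc 2 < length p\<close> by (simp add: nth_eq_iff_index_eq)
      ultimately show False using p1 d02 by auto
    qed
  qed
qed (auto simp: starE_def)

lemma card_A:
  assumes "t \<le> n" and tk: "t \<le> k"
  shows "card {K. K \<subseteq> {1..n} \<and> card K = k \<and> {1..t} \<subseteq> K} = (n - t) choose (k - t)"
    (is "card ?A = _")
proof -
  let ?L = "{L. L \<subseteq> {t+1..n} \<and> card L = k - t}"
  have "bij_betw (\<lambda>L. L \<union> {1..t}) ?L ?A"
  proof (rule bij_betw_byWitness[where f' = "\<lambda>K. K - {1..t}"])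
    show "\<forall>a\<in>?L. a \<union> {1..t} - {1..t} = a" by auto
    show "\<forall>a\<in>?A. a - {1..t} \<union> {1..t} = a" by auto
    show "(\<lambda>L. L \<union> {1..t}) ` ?L \<subseteq> ?A"
    proof
      fix K assume "K \<in> (\<lambda>L. L \<union> {1..t}) ` ?L"
      then obtain L where L: "L \<subseteq> {t+1..n}" "card L = k - t" and KL: "K = L \<union> {1..t}" by auto
      have "finite L" using L(1) finite_subset by blast
      have "L \<inter> {1..t} = {}" using L(1) by auto
      then have "card (L \<union> {1..t}) = card L + card {1..t}"
        using \<open>finite L\<close> by (simp add: card_Un_disjoint)
      then have "card K = k" using L tk KL by simp
      moreover have "K \<subseteq> {1..n}" using L(1) KL assms by auto
      ultimately show "K \<in> ?A" using KL by auto
    qed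
    show "(\<lambda>K. K - {1..t}) ` ?A \<subseteq> ?L"
    proof
      fix L assume "L \<in> (\<lambda>K. K - {1..t}) ` ?A"
      then obtain K where K: "K \<subseteq> {1..n}" "card K = k" "{1..t} \<subseteq> K" and KL: "L = K - {1..t}" by auto
      have "finite K" using K(1) finite_subset by blast
      then have "card L = card K - t" using K KL by (simp add: card_Diff_subset)
      moreover have "L \<subseteq> {t+1..n}" using K KL by auto
      ultimately show "L \<in> ?L" using K by auto
    qed
  qed
  then have "card ?A = card ?L" by (simp add: bij_betw_same_card)
  also have "\<dots> = card {t+1..n} choose (k-t)" by (simp add: n_subsets)
  finally show ?thesis by simp
qed

theorem mainTheorem1:
  fixes n k t :: nat
  assumes "0 < t" and "t < k" and "n > 2 * k - t"
  shows "treewidth (kneser_vertices n k) (kneser_adj n k t)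
           \<le> int (n choose k) - int ((n - t) choose (k - t)) - 1"
proof -
  define V where "V = kneser_vertices n k"
  define E where "E = kneser_adj n k t"
  define A where "A = {K\<in>V. {1..t} \<subseteq> K}"
  define C where "C = V - A"
  have nk: "k < n" using assms by linarith
  have finV: "finite V" unfolding V_def kneser_vertices_def by auto
  have cardV: "card V = n choose k" unfolding V_def kneser_vertices_def by (simp add: n_subsets)
  have AV: "A \<subseteq> V" unfolding A_def by auto
  have Aeq: "A = {K. K \<subseteq> {1..n} \<and> card K = k \<and> {1..t} \<subseteq> K}"
    unfolding A_def V_def kneser_vertices_def by auto
  have cardA: "card A = (n - t) choose (k - t)" proof -
    have "t \<le> n" "t \<le> k" using assms by linarith+
    from card_A[OF this] show ?thesis using Aeq by simp
  qed
  have cardC: "card C = card V - card A" unfolding C_def using AV finV by (meson card_Diff_subset finite_subset)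
  have cAV: "card A \<le> card V" using AV finV card_mono by blast
  have finA: "finite A" using AV finV finite_subset by blast
  obtain xs where xs: "distinct xs" "set xs = A" using finite_distinct_list[OF finA] by blast
  define m where "m = length xs"
  define N where "N = (\<lambda>a. {v. E a v})"
  define B where "B = (\<lambda>x. if x = 0 then C else insert (xs!(x-1)) (N (xs!(x-1))))"
  have NC: "N a \<subseteq> C" if "a \<in> A" for a
  proof
    fix v assume "v \<in> N a"
    then have E: "a \<in> V" "v \<in> V" "card (a \<inter> v) < t"
      unfolding N_def E_def kneser_adj_def V_def by auto
    show "v \<in> C"
    proof (rule ccontr)
      assume "v \<notin> C"
      then have "v \<in> A" using E unfolding C_def by auto
      then have "{1..t} \<subseteq> a \<inter> v" using that unfolding A_def by blast
      moreover have "a \<subseteq> {1..n}" using E(1) unfolding V_def kneser_vertices_def by simp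
      then have "finite a" by (rule finite_subset) simp
      then have "finite (a \<inter> v)" by simp
      ultimately have "card {1..t} \<le> card (a \<inter> v)" by (metis card_mono)
      then have "t \<le> card (a \<inter> v)" by simp
      then show False using E by simp
    qed
  qed
  have nonnb: "\<exists>K0\<in>C. K0 \<notin> N a" if "a \<in> A" for a
  proof -
    have a: "a \<subseteq> {1..n}" "card a = k" "{1..t} \<subseteq> a" using that unfolding A_def V_def kneser_vertices_def by auto
    have fa: "finite a" using a(1) finite_subset by blast
    have "card a < card {1..n}" using a nk by simp
    then have "\<not> {1..n} \<subseteq> a" using card_mono fa by (metis finite_atLeastAtMost not_le)
    then obtain x where x: "x \<in> {1..n}" "x \<notin> a" by blast
    have one: "1 \<in> a" using a(3) assms by auto
    define K0 where "K0 = insert x (a - {1})"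
    have cK: "card K0 = k" unfolding K0_def using fa x one a assms(2) by (simp add: card_Diff_singleton)
    have K0V: "K0 \<in> V" unfolding V_def kneser_vertices_def using cK x a one unfolding K0_def by auto
    have "1 \<notin> K0" unfolding K0_def using x one by auto
    moreover have "1 \<in> {1..t}" using assms by simp
    ultimately have "K0 \<notin> A" unfolding A_def by blast
    then have K0C: "K0 \<in> C" using K0V C_def by auto
    have "K0 \<inter> a = a - {1}" unfolding K0_def using x by auto
    then have "card (K0 \<inter> a) = k - 1" using fa one a by (simp add: card_Diff_singleton)
    then have "card (a \<inter> K0) = k - 1" by (simp add: Int_commute)
    then have "K0 \<notin> N a" unfolding N_def E_def kneser_adj_def using assms by auto
    then show ?thesis using K0C by blast
  qed
  have xsA: "x \<in> {1..m} \<Longrightarrow> xs!(x-1) \<in> A" for x using xs(2) unfolding m_def by auto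
  have td: "tree_decomposition V E {0..m} (starE m) B"
    unfolding tree_decomposition_def
  proof (intro conjI ballI impI)
    show "is_tree {0..m} (starE m)" by (rule star_tree)
  next
    fix x assume "x \<in> {0..m}"
    show "B x \<subseteq> V"
    proof (cases "x = 0")
      case True then show ?thesis unfolding B_def C_def by auto
    next
      case False
      then have "x \<in> {1..m}" using \<open>x \<in> {0..m}\<close> by auto
      from xsA[OF this] NC[OF xsA[OF this]] show ?thesis
        unfolding B_def C_def using False AV by auto
    qed
  next
    fix u v assume uv: "u \<in> V" "v \<in> V" "E u v"
    show "\<exists>x\<in>{0..m}. u \<in> B x \<and> v \<in> B x"
    proof (cases "u \<in> A")
      case True
      then obtain i where i: "i < m" "xs!i = u" using xs(2) unfolding m_def by (metis in_set_conv_nth)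
      show ?thesis using i uv by (intro bexI[of _ "Suc i"]) (auto simp: B_def N_def)
    next
      case uA: False
      show ?thesis
      proof (cases "v \<in> A")
        case True
        then obtain i where i: "i < m" "xs!i = v" using xs(2) unfolding m_def by (metis in_set_conv_nth)
        have "E v u" using uv(3) unfolding E_def kneser_adj_def by (auto simp: Int_commute)
        then show ?thesis using i uv by (intro bexI[of _ "Suc i"]) (auto simp: B_def N_def)
      next
        case False
        then show ?thesis using uA uv by (intro bexI[of _ 0]) (auto simp: B_def C_def)
      qed
    qed
  next
    fix v assume v: "v \<in> V"
    show "connected_in {x \<in> {0..m}. v \<in> B x} (starE m)"
    proof (cases "v \<in> A")
      case True
      then obtain i where i: "i < m" "xs!i = v" using xs(2) unfolding m_def by (metis in_set_conv_nth)
      have "{x \<in> {0..m}. v \<in> B x} = {Suc i}"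
      proof safe
        fix x assume x: "x \<in> {0..m}" "v \<in> B x"
        have "x \<noteq> 0" using x True unfolding B_def C_def by (auto split: if_splits)
        then have x1: "x \<in> {1..m}" using x by auto
        have "v \<notin> N (xs!(x-1))" using NC[OF xsA[OF x1]] True C_def by auto
        then have "xs!(x-1) = xs!i" using x \<open>x \<noteq> 0\<close> i unfolding B_def by auto
        moreover have "x - 1 < length xs" using x1 unfolding m_def by auto
        ultimately have "x - 1 = i" using nth_eq_iff_index_eq[OF xs(1)] i unfolding m_def by blast
        then show "x = Suc i" using x1 by auto
      qed (use i in \<open>auto simp: B_def\<close>)
      then show ?thesis by (simp add: single_conn)
    next
      case False
      then have "v \<in> B 0" using v by (simp add: B_def C_def)
      then show ?thesis by (intro star_conn) auto
    qed
  qed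
  define w0 where "w0 = td_width {0..m} B"
  have tw: "treewidth V E \<le> w0" unfolding treewidth_def
  proof (rule least_int_le)
    fix w assume "\<exists>TV TE B. tree_decomposition V E TV TE B \<and> td_width TV B = w"
    then show "w \<ge> -1" by (auto simp: td_width_def)
  next
    show "\<exists>TV TE B'. tree_decomposition V E TV TE B' \<and> td_width TV B' = w0"
      using td w0_def by blast
  qed
  have finC: "finite C" using finV C_def by auto
  have cB: "card (B x) \<le> card C" if "x \<in> {0..m}" for x
  proof (cases "x = 0")
    case True then show ?thesis by (simp add: B_def)
  next
    case False
    then have x1: "x \<in> {1..m}" using that by auto
    let ?a = "xs!(x-1)"
    obtain K0 where K0: "K0 \<in> C" "K0 \<notin> N ?a" using nonnb[OF xsA[OF x1]] by blast
    have "N ?a \<subseteq> C - {K0}" using NC[OF xsA[OF x1]] K0 by auto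
    then have "card (N ?a) \<le> card C - 1" using finC K0
      by (metis card_Diff_singleton card_mono finite_Diff)
    moreover have "card C \<ge> 1" using K0 finC by (metis One_nat_def Suc_leI card_gt_0_iff empty_iff)
    ultimately have "card (insert ?a (N ?a)) \<le> card C"
      using card_insert_le_m1[of "card C" "N ?a" ?a] by linarith
    then show ?thesis using False by (simp add: B_def)
  qed
  have "Max ((\<lambda>x. card (B x)) ` {0..m}) \<le> card C"
    using cB by (subst Max_le_iff) auto
  then have "w0 \<le> int (card C) - 1" unfolding w0_def td_width_def by linarith
  also have "\<dots> = int (n choose k) - int ((n - t) choose (k - t)) - 1"
    using cardC cAV cardV cardA by simp
  finally show ?thesis using tw unfolding V_def E_def by linarith
qed

end
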